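(* Let $h,v$ be permutations of $\Lambda=\{1,\dots,d\}$ such that $\langle h,v\rangle$ acts transitively on $\Lambda$. Then for every integer $M\ge0$ the graph $\Gamma^M$ is strongly connected.
   Context: $\Gamma^M=\Gamma^M_{h,v}$ is the directed multigraph with vertex set $\Lambda$ in which each vertex $\lambda$ has exactly two outgoing edges: one labeled $L$ to $vh^M(\lambda)$ and one labeled $R$ to $vh^{M+1}(\lambda)$. *)

theory Defs
  imports "HOL-Combinatorics.Permutations"
begin

inductive_set gen_group :: "('a \<Rightarrow> 'a) \<Rightarrow> ('a \<Rightarrow> 'a) \<Rightarrow> ('a \<Rightarrow> 'a) set"
  for h v where
  gen_id: "id \<in> gen_group h v"
| gen_h: "g \<in> gen_group h v \<Longrightarrow> h \<circ> g \<in> gen_group h v"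
| gen_v: "g \<in> gen_group h v \<Longrightarrow> v \<circ> g \<in> gen_group h v"
| gen_inv_h: "g \<in> gen_group h v \<Longrightarrow> inv h \<circ> g \<in> gen_group h v"
| gen_inv_v: "g \<in> gen_group h v \<Longrightarrow> inv v \<circ> g \<in> gen_group h v"

definition acts_transitively :: "('a \<Rightarrow> 'a) set \<Rightarrow> 'a set \<Rightarrow> bool" where
  "acts_transitively G A \<longleftrightarrow> (\<forall>x\<in>A. \<forall>y\<in>A. \<exists>g\<in>G. g x = y)"

text \<open>Edge relation of Gamma^M_{h,v} on vertex set A: from lambda an L-edge to
v(h^M lambda) and an R-edge to v(h^(M+1) lambda).  Labels/multiplicities are
irrelevant for strong connectivity.\<close>
definition Gamma_edges :: "'a set \<Rightarrow> ('a \<Rightarrow> 'a) \<Rightarrow> ('a \<Rightarrow> 'a) \<Rightarrow> nat \<Rightarrow> ('a \<times> 'a) set" where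
  "Gamma_edges A h v M =
     {(x, y). x \<in> A \<and> (y = v ((h ^^ M) x) \<or> y = v ((h ^^ (M + 1)) x))}"

definition strongly_connected :: "'a set \<Rightarrow> ('a \<times> 'a) set \<Rightarrow> bool" where
  "strongly_connected A E \<longleftrightarrow> (\<forall>x\<in>A. \<forall>y\<in>A. (x, y) \<in> E\<^sup>*)"

end

theory Submission
  imports Defs "HOL-Combinatorics.Cycles"
begin

lemma iter_reach:
  assumes "p permutes A" "\<And>x. x \<in> A \<Longrightarrow> (x, p x) \<in> E\<^sup>*" "x \<in> A"
  shows "(x, (p ^^ n) x) \<in> E\<^sup>*"
proof (induction n)
  case 0 show ?case by simp
next
  case (Suc n)
  have "(p ^^ n) x \<in> A" using permutes_in_image[OF permutes_funpow[OF assms(1)]] assms(3) by blast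
  then have "((p ^^ n) x, p ((p ^^ n) x)) \<in> E\<^sup>*" using assms(2) by blast
  from rtrancl_trans[OF Suc this] show ?case by simp
qed

lemma back_reach:
  assumes "p permutes A" "finite A" "\<And>x. x \<in> A \<Longrightarrow> (x, p x) \<in> E\<^sup>*" "x \<in> A"
  shows "(p x, x) \<in> E\<^sup>*"
proof -
  have "permutation p" using assms(1,2) permutation_permutes by blast
  then obtain n where n: "p ^^ n = id" "n > 0" by (rule permutation_is_nilpotent)
  have px: "p x \<in> A" using permutes_in_image[OF assms(1)] assms(4) by blast
  have "(p x, (p ^^ (n - 1)) (p x)) \<in> E\<^sup>*" using iter_reach[OF assms(1) assms(3) px] .
  moreover have "(p ^^ (n - 1)) (p x) = (p ^^ n) x"
  proof -
    obtain m where m: "n = Suc m" using n(2) gr0_conv_Suc by blast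
    show ?thesis unfolding m by (simp add: funpow_swap1)
  qed
  ultimately show ?thesis using n(1) by simp
qed

theorem lemma5p2:
  fixes d :: nat and h v :: "nat \<Rightarrow> nat"
  assumes "h permutes {1..d}" and "v permutes {1..d}"
    and "acts_transitively (gen_group h v) {1..d}"
  shows "\<forall>M::nat. strongly_connected {1..d} (Gamma_edges {1..d} h v M)"
proof
  fix M :: nat
  define A where "A = {1..d::nat}"
  define E where "E = Gamma_edges A h v M"
  have fin: "finite A" unfolding A_def by simp
  have hp: "h permutes A" and vp: "v permutes A" using assms A_def by auto
  have hM: "h ^^ M permutes A" by (rule permutes_funpow[OF hp])
  have hM1: "h ^^ (M+1) permutes A" by (rule permutes_funpow[OF hp])
  have fp: "(v \<circ> h ^^ M) permutes A" by (rule permutes_compose[OF hM vp])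
  have gp: "(v \<circ> h ^^ (M+1)) permutes A" by (rule permutes_compose[OF hM1 vp])
  have fe: "(x, (v \<circ> h ^^ M) x) \<in> E\<^sup>*" if "x \<in> A" for x
    using that unfolding E_def Gamma_edges_def by auto
  have ge: "(x, (v \<circ> h ^^ (M+1)) x) \<in> E\<^sup>*" if "x \<in> A" for x
    using that unfolding E_def Gamma_edges_def by auto
  have hinA: "h x \<in> A" "inv h x \<in> A" "v x \<in> A" "inv v x \<in> A" if "x \<in> A" for x
    using that permutes_in_image[OF hp] permutes_in_image[OF vp]
      permutes_in_image[OF permutes_inv[OF hp]] permutes_in_image[OF permutes_inv[OF vp]]
    by auto
  have h1: "(h x, x) \<in> E\<^sup>*" if "x \<in> A" for x
  proof -
    have "(h x, (v \<circ> h ^^ M) (h x)) \<in> E\<^sup>*" using fe hinA that by blast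
    moreover have "(v \<circ> h ^^ M) (h x) = (v \<circ> h ^^ (M+1)) x" by (simp only: Suc_eq_plus1[symmetric] funpow_Suc_right comp_apply)
    ultimately have a: "(h x, (v \<circ> h ^^ (M+1)) x) \<in> E\<^sup>*" by simp
    have "((v \<circ> h ^^ (M+1)) x, x) \<in> E\<^sup>*" using back_reach[OF gp fin ge that] .
    from rtrancl_trans[OF a this] show ?thesis .
  qed
  have ih: "(x, inv h x) \<in> E\<^sup>*" if "x \<in> A" for x
    using h1[OF hinA(2)[OF that]] unfolding permutes_inverses(1)[OF hp] .
  have hf: "(x, h x) \<in> E\<^sup>*" if "x \<in> A" for x
  proof -
    have ih': "\<And>y. y \<in> A \<Longrightarrow> (y, inv h y) \<in> E\<^sup>*" using ih by blast
    have e: "inv h (h x) = x" by (rule permutes_inverses(2)[OF hp])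
    have "(inv h (h x), h x) \<in> E\<^sup>*"
      by (rule back_reach[OF permutes_inv[OF hp] fin ih' hinA(1)[OF that]])
    then show ?thesis unfolding e .
  qed
  have vf: "(y, v y) \<in> E\<^sup>*" if yA: "y \<in> A" for y
  proof -
    obtain x where x: "x \<in> A" "(h ^^ M) x = y"
    proof -
      have "y \<in> (h ^^ M) ` A" using permutes_image[OF hM] yA by simp
      then show ?thesis using that by blast
    qed
    have hf': "\<And>z. z \<in> A \<Longrightarrow> (z, (h ^^ M) z) \<in> E\<^sup>*" using iter_reach[OF hp hf] by blast
    have "(y, x) \<in> E\<^sup>*" using back_reach[OF hM fin hf' x(1)] unfolding x(2) .
    moreover have "(x, v y) \<in> E\<^sup>*" using fe[OF x(1)] unfolding comp_apply x(2) .
    ultimately show ?thesis by (rule rtrancl_trans)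
  qed
  have iv: "(x, inv v x) \<in> E\<^sup>*" if "x \<in> A" for x
    using back_reach[OF vp fin vf hinA(4)[OF that]] unfolding permutes_inverses(1)[OF vp] .
  have main: "\<forall>x\<in>A. (x, g x) \<in> E\<^sup>* \<and> g x \<in> A" if "g \<in> gen_group h v" for g
    using that
  proof (induction rule: gen_group.induct)
    case gen_id then show ?case by simp
  next
    case (gen_h g)
    show ?case
    proof
      fix x assume x: "x \<in> A"
      have 1: "(x, g x) \<in> E\<^sup>*" "g x \<in> A" using gen_h.IH x by auto
      have "(g x, h (g x)) \<in> E\<^sup>*" using hf[OF 1(2)] .
      from rtrancl_trans[OF 1(1) this] show "(x, (h \<circ> g) x) \<in> E\<^sup>* \<and> (h \<circ> g) x \<in> A"
        using hinA(1)[OF 1(2)] by simp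
    qed
  next
    case (gen_v g)
    show ?case
    proof
      fix x assume x: "x \<in> A"
      have 1: "(x, g x) \<in> E\<^sup>*" "g x \<in> A" using gen_v.IH x by auto
      have "(g x, v (g x)) \<in> E\<^sup>*" using vf[OF 1(2)] .
      from rtrancl_trans[OF 1(1) this] show "(x, (v \<circ> g) x) \<in> E\<^sup>* \<and> (v \<circ> g) x \<in> A"
        using hinA(3)[OF 1(2)] by simp
    qed
  next
    case (gen_inv_h g)
    show ?case
    proof
      fix x assume x: "x \<in> A"
      have 1: "(x, g x) \<in> E\<^sup>*" "g x \<in> A" using gen_inv_h.IH x by auto
      have "(g x, inv h (g x)) \<in> E\<^sup>*" using ih[OF 1(2)] .
      from rtrancl_trans[OF 1(1) this] show "(x, (inv h \<circ> g) x) \<in> E\<^sup>* \<and> (inv h \<circ> g) x \<in> A"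
        using hinA(2)[OF 1(2)] by simp
    qed
  next
    case (gen_inv_v g)
    show ?case
    proof
      fix x assume x: "x \<in> A"
      have 1: "(x, g x) \<in> E\<^sup>*" "g x \<in> A" using gen_inv_v.IH x by auto
      have "(g x, inv v (g x)) \<in> E\<^sup>*" using iv[OF 1(2)] .
      from rtrancl_trans[OF 1(1) this] show "(x, (inv v \<circ> g) x) \<in> E\<^sup>* \<and> (inv v \<circ> g) x \<in> A"
        using hinA(4)[OF 1(2)] by simp
    qed
  qed
  show "strongly_connected {1..d} (Gamma_edges {1..d} h v M)"
    unfolding strongly_connected_def
  proof (intro ballI)
    fix x y assume "x \<in> {1..d}" "y \<in> {1..d}"
    then obtain g where "g \<in> gen_group h v" "g x = y"
      using assms(3) unfolding acts_transitively_def by blast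
    then show "(x, y) \<in> (Gamma_edges {1..d} h v M)\<^sup>*"
      using main \<open>x \<in> {1..d}\<close> unfolding A_def E_def by blast
  qed
qed

end
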